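(* Let $\mathcal{M}$ be a matroid on $[n]$, $\ell$ an integer, and $\gamma$ an $\ell$-cover of $\mathcal{M}$. Let $F$ be a focal basis of $\gamma$ and let $G\in\mathcal{B}(\mathcal{M})$. Then: (1) For any $A\subseteq F-G$ and any $B\subseteq G-F$ such that $(F-A)\cup B\in\mathcal{B}(\mathcal{M})$, we have $\gamma(A)\leq\gamma(B)$, and if $A\subseteq\operatorname{supp}\gamma$ then $B\subseteq\operatorname{supp}\gamma$. (2) For any bijection $\sigma:F-G\to G-F$ such that $(F-i)\cup\sigma(i)\in\mathcal{B}(\mathcal{M})$ for every $i\in F-G$ (such a bijection always exists), we have $\gamma(i)\leq\gamma(\sigma(i))$ for all $i\in F-G$. Suppose moreover that $G$ is also a focal basis of $\gamma$. Then: (3) If $A,B$ are as in (1) and additionally $(G-B)\cup A\in\mathcal{B}(\mathcal{M})$, then $\gamma(A)=\gamma(B)$, and $A\subseteq\operatorname{supp}\gamma$ if and only if $B\subseteq\operatorname{supp}\gamma$. (4) For $\sigma$ as in (2), $\gamma(i)=\gamma(\sigma(i))$ for all $i\in F-G$.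
   Context: $\mathcal{B}(\mathcal{M})$ is the set of bases of $\mathcal{M}$. For $\gamma:[n]\to\mathbb{N}_0$ and $S\subseteq[n]$, $\gamma(S)=\sum_{i\in S}\gamma(i)$ and $\operatorname{supp}\gamma=\{i:\gamma(i)>0\}$. $\gamma$ is an $\ell$-cover of $\mathcal{M}$ if $\gamma(F)\geq\ell$ for every basis $F$. A basis $F$ is a focal basis of $\gamma$ if $\gamma(F)=\ell$. *)

theory Defs
  imports Main
begin

definition matroid_bases :: "nat \<Rightarrow> nat set set \<Rightarrow> bool" where
  "matroid_bases n \<B> \<longleftrightarrow>
     \<B> \<noteq> {} \<and> (\<forall>F\<in>\<B>. F \<subseteq> {1..n}) \<and>
     (\<forall>F\<in>\<B>. \<forall>G\<in>\<B>. \<forall>x\<in>F - G. \<exists>y\<in>G - F. insert y (F - {x}) \<in> \<B>)"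

definition wt :: "(nat \<Rightarrow> nat) \<Rightarrow> nat set \<Rightarrow> nat" where
  "wt \<gamma> S = (\<Sum>i\<in>S. \<gamma> i)"

definition supp :: "nat \<Rightarrow> (nat \<Rightarrow> nat) \<Rightarrow> nat set" where
  "supp n \<gamma> = {i \<in> {1..n}. 0 < \<gamma> i}"

definition is_cover :: "nat set set \<Rightarrow> int \<Rightarrow> (nat \<Rightarrow> nat) \<Rightarrow> bool" where
  "is_cover \<B> l \<gamma> \<longleftrightarrow> (\<forall>F\<in>\<B>. int (wt \<gamma> F) \<ge> l)"

definition focal_basis :: "nat set set \<Rightarrow> int \<Rightarrow> (nat \<Rightarrow> nat) \<Rightarrow> nat set \<Rightarrow> bool" where
  "focal_basis \<B> l \<gamma> F \<longleftrightarrow> F \<in> \<B> \<and> int (wt \<gamma> F) = l"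

end

theory Submission
  imports Defs
begin

lemma mb_fin:
  assumes "matroid_bases n \<B>" "F \<in> \<B>" shows "finite F" "F \<subseteq> {1..n}"
proof -
  show "F \<subseteq> {1..n}" using assms by (auto simp: matroid_bases_def)
  then show "finite F" using finite_subset by blast
qed

lemma mb_ax:
  assumes "matroid_bases n \<B>" "F \<in> \<B>" "G \<in> \<B>" "x \<in> F - G"
  shows "\<exists>y\<in>G - F. insert y (F - {x}) \<in> \<B>"
  using assms unfolding matroid_bases_def by blast

lemma dual_exch:
  assumes M: "matroid_bases n \<B>" and F: "F \<in> \<B>"
  shows "H \<in> \<B> \<Longrightarrow> b \<in> H - F \<Longrightarrow> \<exists>x\<in>F-H. insert b (F-{x}) \<in> \<B>"
proof (induction "card (H - F)" arbitrary: H rule: less_induct)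
  case less
  have fin: "finite H" using mb_fin[OF M less.prems(1)] by simp
  show ?case
  proof (cases "H - F = {b}")
    case True
    have "F - H \<noteq> {}"
    proof
      assume "F - H = {}"
      then show False using mb_ax[OF M less.prems(1) F less.prems(2)] by auto
    qed
    then obtain x where x: "x \<in> F - H" by blast
    from mb_ax[OF M F less.prems(1) x] True obtain y where "y \<in> {b}" "insert y (F - {x}) \<in> \<B>" by auto
    then show ?thesis using x by auto
  next
    case False
    then obtain c where c: "c \<in> H - F" "c \<noteq> b" using less.prems(2) by blast
    from mb_ax[OF M less.prems(1) F c(1)] obtain y where y: "y \<in> F - H" "insert y (H - {c}) \<in> \<B>" by blast
    let ?H = "insert y (H - {c})"
    have eq: "?H - F = (H - F) - {c}" using y by auto
    have "card (?H - F) < card (H - F)" unfolding eq using c fin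
      by (meson Diff_iff card_Diff1_less finite_Diff)
    moreover have "b \<in> ?H - F" using c less.prems(2) eq by auto
    ultimately obtain x where x: "x \<in> F - ?H" "insert b (F - {x}) \<in> \<B>"
      using less.hyps y(2) by blast
    then show ?thesis using c(1) by auto
  qed
qed

lemma hall:
  fixes N :: "'a \<Rightarrow> 'b set"
  shows "finite A \<Longrightarrow> \<forall>x\<in>A. finite (N x) \<Longrightarrow> \<forall>S\<subseteq>A. card S \<le> card (\<Union>(N ` S))
    \<Longrightarrow> \<exists>f. inj_on f A \<and> (\<forall>x\<in>A. f x \<in> N x)"
proof (induction "card A" arbitrary: A N rule: less_induct)
  case less
  show ?case
  proof (cases "A = {}")
    case True then show ?thesis by auto
  next
    case ne: False
    show ?thesis
    proof (cases "\<exists>S. S \<subseteq> A \<and> S \<noteq> {} \<and> S \<noteq> A \<and> card (\<Union>(N ` S)) \<le> card S")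
      case True
      then obtain S where S: "S \<subseteq> A" "S \<noteq> {}" "S \<noteq> A" "card (\<Union>(N ` S)) \<le> card S" by blast
      define U where "U = \<Union>(N ` S)"
      have finS: "finite S" using S less.prems finite_subset by blast
      have cS: "card S < card A" using S less.prems(1) by (simp add: psubset_card_mono psubsetI)
      have "\<exists>f1. inj_on f1 S \<and> (\<forall>x\<in>S. f1 x \<in> N x)"
      proof (rule less.hyps[OF cS finS])
        show "\<forall>x\<in>S. finite (N x)" using less.prems(2) S(1) by auto
        show "\<forall>T\<subseteq>S. card T \<le> card (\<Union>(N ` T))" using less.prems(3) S(1) by auto
      qed
      then obtain f1 where f1: "inj_on f1 S" "\<forall>x\<in>S. f1 x \<in> N x" by blast
      have finU: "finite U" using finS less.prems(2) S(1) U_def by auto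
      have eqU: "card U = card S" using S(4) less.prems(3) S(1) U_def by (meson le_antisym)
      define N2 where "N2 = (\<lambda>x. N x - U)"
      have cA: "card (A - S) < card A"
      proof -
        have "card (A - S) = card A - card S" using card_Diff_subset[OF finS S(1)] .
        moreover have "card S > 0" using finS S(2) by auto
        moreover have "card S < card A" using cS .
        ultimately show ?thesis by linarith
      qed
      have "\<exists>f2. inj_on f2 (A - S) \<and> (\<forall>x\<in>A-S. f2 x \<in> N2 x)"
      proof (rule less.hyps[OF cA])
        show "finite (A - S)" using less.prems(1) by simp
        show "\<forall>x\<in>A - S. finite (N2 x)" using less.prems(2) N2_def by auto
        show "\<forall>T\<subseteq>A - S. card T \<le> card (\<Union> (N2 ` T))"
        proof (intro allI impI)
          fix T assume T: "T \<subseteq> A - S"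
          have finT: "finite T" using T less.prems(1) finite_subset by blast
          have e: "\<Union>(N2 ` T) = \<Union>(N ` (S \<union> T)) - U" unfolding N2_def U_def by auto
          have finST: "finite (\<Union>(N ` (S \<union> T)))" using finS finT less.prems(2) S(1) T by auto
          have sub: "U \<subseteq> \<Union>(N ` (S \<union> T))" unfolding U_def by auto
          have c1: "card (\<Union>(N2 ` T)) = card (\<Union>(N ` (S \<union> T))) - card U"
            unfolding e using card_Diff_subset[OF finU sub] .
          have c2: "card (S \<union> T) \<le> card (\<Union>(N ` (S \<union> T)))" using less.prems(3) S(1) T by (meson Diff_subset Un_least subset_trans)
          have c3: "card (S \<union> T) = card S + card T" using T finS finT
            by (subst card_Un_disjoint) auto
          show "card T \<le> card (\<Union> (N2 ` T))" using c1 c2 c3 eqU by linarith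
        qed
      qed
      then obtain f2 where f2: "inj_on f2 (A - S)" "\<forall>x\<in>A-S. f2 x \<in> N2 x" by blast
      define f where "f = (\<lambda>x. if x \<in> S then f1 x else f2 x)"
      have "inj_on f A"
        unfolding inj_on_def
      proof (intro ballI impI)
        fix x y assume xy: "x \<in> A" "y \<in> A" "f x = f y"
        have inU: "\<And>z. z \<in> S \<Longrightarrow> f1 z \<in> U" using f1(2) U_def by auto
        have outU: "\<And>z. z \<in> A - S \<Longrightarrow> f2 z \<notin> U" using f2(2) N2_def by auto
        show "x = y"
        proof (cases "x \<in> S"; cases "y \<in> S")
          assume "x \<in> S" "y \<in> S"
          then show ?thesis using xy(3) f1(1) unfolding f_def inj_on_def by auto
        next
          assume "x \<notin> S" "y \<notin> S"
          then have "x \<in> A - S" "y \<in> A - S" using xy by auto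
          then show ?thesis using xy(3) f2(1) \<open>x \<notin> S\<close> \<open>y \<notin> S\<close> unfolding f_def inj_on_def by auto
        next
          assume "x \<in> S" "y \<notin> S"
          then have "f x = f1 x" "f y = f2 y" "f1 x \<in> U" "f2 y \<notin> U"
            using xy inU[of x] outU[of y] unfolding f_def by simp_all
          then show ?thesis using xy(3) by metis
        next
          assume "x \<notin> S" "y \<in> S"
          then have "f y = f1 y" "f x = f2 x" "f1 y \<in> U" "f2 x \<notin> U"
            using xy inU[of y] outU[of x] unfolding f_def by simp_all
          then show ?thesis using xy(3) by metis
        qed
      qed
      moreover have "\<forall>x\<in>A. f x \<in> N x" using f1 f2 N2_def f_def by auto
      ultimately show ?thesis by blast
    next
      case False
      hence big: "\<And>S. S \<subseteq> A \<Longrightarrow> S \<noteq> {} \<Longrightarrow> S \<noteq> A \<Longrightarrow> card S < card (\<Union>(N ` S))"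
        by (meson not_le)
      obtain a where a: "a \<in> A" using ne by blast
      have "card {a} \<le> card (N a)" using less.prems(3) a by (metis UN_insert UN_empty Un_empty_right empty_subsetI insert_subset)
      then have "N a \<noteq> {}" by auto
      then obtain y where y: "y \<in> N a" by blast
      define N2 where "N2 = (\<lambda>x. N x - {y})"
      have cA: "card (A - {a}) < card A" by (rule card_Diff1_less[OF less.prems(1) a])
      have "\<exists>f2. inj_on f2 (A - {a}) \<and> (\<forall>x\<in>A-{a}. f2 x \<in> N2 x)"
      proof (rule less.hyps[OF cA])
        show "finite (A - {a})" using less.prems(1) by simp
        show "\<forall>x\<in>A - {a}. finite (N2 x)" using less.prems(2) N2_def by auto
        show "\<forall>T\<subseteq>A - {a}. card T \<le> card (\<Union> (N2 ` T))"
        proof (intro allI impI)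
          fix T assume T: "T \<subseteq> A - {a}"
          show "card T \<le> card (\<Union> (N2 ` T))"
          proof (cases "T = {}")
            case True then show ?thesis by simp
          next
            case False
            have finT: "finite T" using T less.prems(1) finite_subset by blast
            have "card T < card (\<Union>(N ` T))" using big[of T] T a False by auto
            moreover have e: "\<Union>(N2 ` T) = \<Union>(N ` T) - {y}" unfolding N2_def by auto
            moreover have "card (\<Union>(N ` T)) - 1 \<le> card (\<Union>(N2 ` T))"
              unfolding e by (cases "y \<in> \<Union>(N ` T)") (auto simp: card_Diff_singleton)
            ultimately show ?thesis by linarith
          qed
        qed
      qed
      then obtain f2 where f2: "inj_on f2 (A - {a})" "\<forall>x\<in>A-{a}. f2 x \<in> N2 x" by blast
      have "y \<notin> f2 ` (A - {a})" using f2(2) N2_def by auto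
      then have i1: "inj_on (f2(a := y)) (A - {a})" using f2(1) by (simp add: inj_on_fun_updI)
      have i2: "y \<notin> (f2(a := y)) ` (A - {a} - {a})" using \<open>y \<notin> f2 ` (A - {a})\<close> by auto
      have "inj_on (f2(a := y)) A"
        using inj_on_insert[of "f2(a := y)" a "A - {a}"] i1 a \<open>y \<notin> f2 ` (A - {a})\<close>
        by (simp add: insert_absorb)
      moreover have "\<forall>x\<in>A. (f2(a := y)) x \<in> N x" using f2(2) y N2_def by auto
      ultimately show ?thesis by blast
    qed
  qed
qed


lemma exch_seq:
  assumes M: "matroid_bases n \<B>" and F: "F \<in> \<B>" and G: "G \<in> \<B>"
  shows "finite S \<Longrightarrow> S \<subseteq> F - G \<Longrightarrow> \<exists>Y. (F - S) \<union> Y \<in> \<B> \<and> Y \<subseteq> G - F \<and> card Y = card S"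
proof (induction S rule: finite_induct)
  case empty
  show ?case using F by (intro exI[of _ "{}"]) auto
next
  case (insert x S)
  then obtain Y where Y: "(F - S) \<union> Y \<in> \<B>" "Y \<subseteq> G - F" "card Y = card S" by auto
  have xin: "x \<in> ((F - S) \<union> Y) - G" using insert by auto
  from mb_ax[OF M Y(1) G xin] obtain y where
    y: "y \<in> G - ((F - S) \<union> Y)" "insert y (((F - S) \<union> Y) - {x}) \<in> \<B>" by blast
  have yF: "y \<notin> F" using y insert.prems by auto
  have xY: "x \<notin> Y" using Y(2) insert.prems by auto
  have e: "insert y (((F - S) \<union> Y) - {x}) = (F - insert x S) \<union> insert y Y" using xY by auto
  have finY: "finite Y" using Y(2) mb_fin[OF M G] finite_subset by blast
  have "card (insert y Y) = card (insert x S)" using y finY Y(3) insert.hyps by auto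
  then show ?case using y(2) e Y(2) yF y(1) by (intro exI[of _ "insert y Y"]) auto
qed

lemma hall_cond:
  assumes M: "matroid_bases n \<B>" and F: "F \<in> \<B>" and G: "G \<in> \<B>" and S: "S \<subseteq> F - G"
  shows "card S \<le> card (\<Union>x\<in>S. {y\<in>G-F. insert y (F-{x}) \<in> \<B>})"
proof -
  have finS: "finite S" using S mb_fin[OF M F] finite_subset by blast
  obtain Y where Y: "(F - S) \<union> Y \<in> \<B>" "Y \<subseteq> G - F" "card Y = card S"
    using exch_seq[OF M F G finS S] by blast
  have sub2: "Y \<subseteq> (\<Union>x\<in>S. {y\<in>G-F. insert y (F-{x}) \<in> \<B>})"
  proof
    fix y assume yY: "y \<in> Y"
    then have "y \<in> ((F - S) \<union> Y) - F" using Y(2) by auto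
    from dual_exch[OF M F Y(1) this] obtain x where
      x: "x \<in> F - ((F - S) \<union> Y)" "insert y (F - {x}) \<in> \<B>" by blast
    have "x \<in> S" using x(1) by auto
    then show "y \<in> (\<Union>x\<in>S. {y\<in>G-F. insert y (F-{x}) \<in> \<B>})" using x(2) yY Y(2) by blast
  qed
  have sub: "(\<Union>x\<in>S. {y\<in>G-F. insert y (F-{x}) \<in> \<B>}) \<subseteq> G" by blast
  have fin: "finite (\<Union>x\<in>S. {y\<in>G-F. insert y (F-{x}) \<in> \<B>})"
    using finite_subset[OF sub mb_fin(1)[OF M G]] .
  show ?thesis using card_mono[OF fin sub2] Y(3) by simp
qed

lemma inj_exch:
  assumes M: "matroid_bases n \<B>" and F: "F \<in> \<B>" and G: "G \<in> \<B>"
  shows "\<exists>f. inj_on f (F - G) \<and> (\<forall>x\<in>F-G. f x \<in> G - F \<and> insert (f x) (F - {x}) \<in> \<B>)"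
proof -
  have "\<exists>f. inj_on f (F - G) \<and> (\<forall>x\<in>F-G. f x \<in> {y\<in>G-F. insert y (F-{x}) \<in> \<B>})"
  proof (rule hall)
    show "finite (F - G)" using mb_fin[OF M F] by simp
    show "\<forall>x\<in>F - G. finite {y \<in> G - F. insert y (F - {x}) \<in> \<B>}" using mb_fin[OF M G] by auto
    show "\<forall>S\<subseteq>F - G. card S \<le> card (\<Union>x\<in>S. {y \<in> G - F. insert y (F - {x}) \<in> \<B>})"
      using hall_cond[OF M F G] by blast
  qed
  then show ?thesis by auto
qed

lemma bij_exch:
  assumes M: "matroid_bases n \<B>" and F: "F \<in> \<B>" and G: "G \<in> \<B>"
  shows "\<exists>\<sigma>. bij_betw \<sigma> (F - G) (G - F) \<and> (\<forall>i\<in>F - G. insert (\<sigma> i) (F - {i}) \<in> \<B>)"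
proof -
  obtain f where f: "inj_on f (F - G)" "\<forall>x\<in>F-G. f x \<in> G - F \<and> insert (f x) (F - {x}) \<in> \<B>"
    using inj_exch[OF M F G] by blast
  obtain g where g: "inj_on g (G - F)" "\<forall>x\<in>G-F. g x \<in> F - G"
    using inj_exch[OF M G F] by blast
  have finF: "finite (F - G)" using mb_fin[OF M F] by simp
  have finG: "finite (G - F)" using mb_fin[OF M G] by simp
  have c1: "card (F - G) \<le> card (G - F)" using card_inj_on_le[OF f(1) _ finG] f(2) by blast
  have c2: "card (G - F) \<le> card (F - G)" using card_inj_on_le[OF g(1) _ finF] g(2) by blast
  have sub: "f ` (F - G) \<subseteq> G - F" using f(2) by auto
  have "card (f ` (F - G)) = card (G - F)" using card_image[OF f(1)] c1 c2 by simp
  then have "f ` (F - G) = G - F" using card_subset_eq[OF finG sub] by simp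
  then have "bij_betw f (F - G) (G - F)" using f(1) by (simp add: bij_betw_def)
  then show ?thesis using f(2) by blast
qed

lemma part1w:
  assumes M: "matroid_bases n \<B>" and cov: "is_cover \<B> l \<gamma>" and foc: "focal_basis \<B> l \<gamma> F"
    and G: "G \<in> \<B>" and A: "A \<subseteq> F - G" and B: "B \<subseteq> G - F" and H: "(F - A) \<union> B \<in> \<B>"
  shows "wt \<gamma> A \<le> wt \<gamma> B"
proof -
  have F: "F \<in> \<B>" using foc focal_basis_def by blast
  have finF: "finite F" using mb_fin[OF M F] by simp
  have finB: "finite B" using B mb_fin[OF M G] finite_subset by blast
  have e1: "wt \<gamma> ((F - A) \<union> B) = wt \<gamma> (F - A) + wt \<gamma> B"
    unfolding wt_def using finF finB B by (subst sum.union_disjoint) auto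
  have e2: "wt \<gamma> F = wt \<gamma> (F - A) + wt \<gamma> A"
    unfolding wt_def using finF A by (subst sum.subset_diff[of A F]) auto
  have "int (wt \<gamma> ((F - A) \<union> B)) \<ge> l" using cov H is_cover_def by blast
  moreover have "int (wt \<gamma> F) = l" using foc focal_basis_def by blast
  ultimately show ?thesis using e1 e2 by linarith
qed

lemma part1s:
  assumes M: "matroid_bases n \<B>" and cov: "is_cover \<B> l \<gamma>" and foc: "focal_basis \<B> l \<gamma> F"
    and G: "G \<in> \<B>" and A: "A \<subseteq> F - G" and B: "B \<subseteq> G - F" and H: "(F - A) \<union> B \<in> \<B>"
    and As: "A \<subseteq> supp n \<gamma>"
  shows "B \<subseteq> supp n \<gamma>"
proof
  fix b assume b: "b \<in> B"
  have F: "F \<in> \<B>" using foc focal_basis_def by blast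
  have "b \<in> ((F - A) \<union> B) - F" using b B by auto
  from dual_exch[OF M F H this] obtain x where
    x: "x \<in> F - ((F - A) \<union> B)" "insert b (F - {x}) \<in> \<B>" by blast
  have xA: "x \<in> A" using x(1) by auto
  have "wt \<gamma> {x} \<le> wt \<gamma> {b}"
    using part1w[OF M cov foc G, of "{x}" "{b}"] xA A b B x(2) by auto
  then have "\<gamma> x \<le> \<gamma> b" by (simp add: wt_def)
  moreover have "0 < \<gamma> x" using xA As supp_def by auto
  moreover have "b \<in> {1..n}" using b B mb_fin[OF M G] by auto
  ultimately show "b \<in> supp n \<gamma>" using supp_def by auto
qed

theorem lemma3p3:
  fixes n :: nat and \<B> :: "nat set set" and l :: int and \<gamma> :: "nat \<Rightarrow> nat"
    and F G :: "nat set"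
  assumes M: "matroid_bases n \<B>"
    and cov: "is_cover \<B> l \<gamma>"
    and foc: "focal_basis \<B> l \<gamma> F"
    and G: "G \<in> \<B>"
  shows
    "(\<forall>A B. A \<subseteq> F - G \<and> B \<subseteq> G - F \<and> (F - A) \<union> B \<in> \<B> \<longrightarrow>
        wt \<gamma> A \<le> wt \<gamma> B \<and> (A \<subseteq> supp n \<gamma> \<longrightarrow> B \<subseteq> supp n \<gamma>))
   \<and> (\<exists>\<sigma>. bij_betw \<sigma> (F - G) (G - F) \<and> (\<forall>i\<in>F - G. insert (\<sigma> i) (F - {i}) \<in> \<B>))
   \<and> (\<forall>\<sigma>. bij_betw \<sigma> (F - G) (G - F) \<and> (\<forall>i\<in>F - G. insert (\<sigma> i) (F - {i}) \<in> \<B>) \<longrightarrow>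
        (\<forall>i\<in>F - G. \<gamma> i \<le> \<gamma> (\<sigma> i)))
   \<and> (focal_basis \<B> l \<gamma> G \<longrightarrow>
        (\<forall>A B. A \<subseteq> F - G \<and> B \<subseteq> G - F \<and> (F - A) \<union> B \<in> \<B> \<and> (G - B) \<union> A \<in> \<B> \<longrightarrow>
           wt \<gamma> A = wt \<gamma> B \<and> (A \<subseteq> supp n \<gamma> \<longleftrightarrow> B \<subseteq> supp n \<gamma>))
      \<and> (\<forall>\<sigma>. bij_betw \<sigma> (F - G) (G - F) \<and> (\<forall>i\<in>F - G. insert (\<sigma> i) (F - {i}) \<in> \<B>) \<longrightarrow>
           (\<forall>i\<in>F - G. \<gamma> i = \<gamma> (\<sigma> i))))"
proof -
  have F: "F \<in> \<B>" using foc focal_basis_def by blast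
  have P1: "\<forall>A B. A \<subseteq> F - G \<and> B \<subseteq> G - F \<and> (F - A) \<union> B \<in> \<B> \<longrightarrow>
        wt \<gamma> A \<le> wt \<gamma> B \<and> (A \<subseteq> supp n \<gamma> \<longrightarrow> B \<subseteq> supp n \<gamma>)"
  proof (intro allI impI conjI)
    fix A B assume ab: "A \<subseteq> F - G \<and> B \<subseteq> G - F \<and> (F - A) \<union> B \<in> \<B>"
    show "wt \<gamma> A \<le> wt \<gamma> B" using part1w[OF M cov foc G, of A B] ab by blast
    show "A \<subseteq> supp n \<gamma> \<Longrightarrow> B \<subseteq> supp n \<gamma>" using part1s[OF M cov foc G, of A B] ab by blast
  qed
  have P2: "\<forall>\<sigma>. bij_betw \<sigma> (F - G) (G - F) \<and> (\<forall>i\<in>F - G. insert (\<sigma> i) (F - {i}) \<in> \<B>) \<longrightarrow>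
        (\<forall>i\<in>F - G. \<gamma> i \<le> \<gamma> (\<sigma> i))"
  proof (intro allI impI ballI)
    fix \<sigma> i assume s: "bij_betw \<sigma> (F - G) (G - F) \<and> (\<forall>i\<in>F - G. insert (\<sigma> i) (F - {i}) \<in> \<B>)"
      and i: "i \<in> F - G"
    have si: "\<sigma> i \<in> G - F" using s i bij_betwE by blast
    have "(F - {i}) \<union> {\<sigma> i} \<in> \<B>" using s i by auto
    then have "wt \<gamma> {i} \<le> wt \<gamma> {\<sigma> i}" using part1w[OF M cov foc G, of "{i}" "{\<sigma> i}"] i si by auto
    then show "\<gamma> i \<le> \<gamma> (\<sigma> i)" by (simp add: wt_def)
  qed
  have P3: "focal_basis \<B> l \<gamma> G \<Longrightarrow>
        (\<forall>A B. A \<subseteq> F - G \<and> B \<subseteq> G - F \<and> (F - A) \<union> B \<in> \<B> \<and> (G - B) \<union> A \<in> \<B> \<longrightarrow>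
           wt \<gamma> A = wt \<gamma> B \<and> (A \<subseteq> supp n \<gamma> \<longleftrightarrow> B \<subseteq> supp n \<gamma>))"
  proof (intro allI impI)
    fix A B assume fG: "focal_basis \<B> l \<gamma> G"
      and ab: "A \<subseteq> F - G \<and> B \<subseteq> G - F \<and> (F - A) \<union> B \<in> \<B> \<and> (G - B) \<union> A \<in> \<B>"
    have "wt \<gamma> A \<le> wt \<gamma> B" using part1w[OF M cov foc G, of A B] ab by blast
    moreover have "wt \<gamma> B \<le> wt \<gamma> A" using part1w[OF M cov fG F, of B A] ab by blast
    moreover have "A \<subseteq> supp n \<gamma> \<Longrightarrow> B \<subseteq> supp n \<gamma>" using part1s[OF M cov foc G, of A B] ab by blast
    moreover have "B \<subseteq> supp n \<gamma> \<Longrightarrow> A \<subseteq> supp n \<gamma>" using part1s[OF M cov fG F, of B A] ab by blast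
    ultimately show "wt \<gamma> A = wt \<gamma> B \<and> (A \<subseteq> supp n \<gamma> \<longleftrightarrow> B \<subseteq> supp n \<gamma>)" by auto
  qed
  have P4: "focal_basis \<B> l \<gamma> G \<Longrightarrow>
      (\<forall>\<sigma>. bij_betw \<sigma> (F - G) (G - F) \<and> (\<forall>i\<in>F - G. insert (\<sigma> i) (F - {i}) \<in> \<B>) \<longrightarrow>
           (\<forall>i\<in>F - G. \<gamma> i = \<gamma> (\<sigma> i)))"
  proof (intro allI impI ballI)
    fix \<sigma> i assume fG: "focal_basis \<B> l \<gamma> G"
      and s: "bij_betw \<sigma> (F - G) (G - F) \<and> (\<forall>i\<in>F - G. insert (\<sigma> i) (F - {i}) \<in> \<B>)"
      and i: "i \<in> F - G"
    have le: "\<forall>j\<in>F - G. \<gamma> j \<le> \<gamma> (\<sigma> j)" using P2 s by blast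
    have finF: "finite F" using mb_fin[OF M F] by simp
    have finG: "finite G" using mb_fin[OF M G] by simp
    have eF: "wt \<gamma> F = wt \<gamma> (F - G) + wt \<gamma> (F \<inter> G)"
      unfolding wt_def using sum.subset_diff[of "F \<inter> G" F \<gamma>] finF by (simp add: Diff_Int)
    have eG: "wt \<gamma> G = wt \<gamma> (G - F) + wt \<gamma> (F \<inter> G)"
      unfolding wt_def using sum.subset_diff[of "F \<inter> G" G \<gamma>] finG by (simp add: Diff_Int Int_commute)
    have "int (wt \<gamma> F) = l" "int (wt \<gamma> G) = l" using foc fG focal_basis_def by blast+
    then have "wt \<gamma> (F - G) = wt \<gamma> (G - F)" using eF eG by linarith
    also have "wt \<gamma> (G - F) = (\<Sum>j\<in>F - G. \<gamma> (\<sigma> j))"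
      unfolding wt_def using sum.reindex_bij_betw[of \<sigma> "F - G" "G - F" \<gamma>] s by simp
    finally have eq: "(\<Sum>j\<in>F - G. \<gamma> j) = (\<Sum>j\<in>F - G. \<gamma> (\<sigma> j))" unfolding wt_def .
    show "\<gamma> i = \<gamma> (\<sigma> i)"
    proof (rule ccontr)
      assume "\<gamma> i \<noteq> \<gamma> (\<sigma> i)"
      then have "\<gamma> i < \<gamma> (\<sigma> i)" using le i by force
      then have "(\<Sum>j\<in>F - G. \<gamma> j) < (\<Sum>j\<in>F - G. \<gamma> (\<sigma> j))"
        using sum_strict_mono_ex1[of "F - G" \<gamma> "\<lambda>j. \<gamma> (\<sigma> j)"] le i finF by blast
      then show False using eq by simp
    qed
  qed
  have P0: "\<exists>\<sigma>. bij_betw \<sigma> (F - G) (G - F) \<and> (\<forall>i\<in>F - G. insert (\<sigma> i) (F - {i}) \<in> \<B>)"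
    using bij_exch[OF M F G] .
  show ?thesis
    apply (intro conjI impI)
         apply (rule P1)
        apply (rule P0)
       apply (rule P2)
      apply (erule P3)
     apply (erule P4)
    done
qed

end
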